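(* Let $\mathcal G=(V,E,r)$ be a graph. The divisor class group of $\mathbf A(\mathcal G)$ is free abelian of rank $2|E|-|V|+\iota$, where $\iota$ is the number of isolated vertices of $\mathcal G$.
   Context: A graph $\mathcal G=(V,E,r)$ consists of a finite vertex set $V$, a finite edge set $E$ disjoint from $V$, and a map $r$ assigning to each edge a two-element subset of $V$; multiple edges allowed, no loops. An agglomeration on $\mathcal G$ is a function $a\colon V\cup E\to\mathbb N_0$ with $a(v)\ge a(e)$ whenever $v$ is incident with $e$; $\mathbf A(\mathcal G)$ is the monoid of agglomerations under pointwise addition; it is a Krull monoid. For a Krull monoid $H$ with divisor theory $\varphi\colon H\to D=\mathbb N_0^{(I)}$ (a divisor homomorphism, i.e. $\varphi(a)$ a summand of $\varphi(b)$ implies $a$ a summand of $b$, such that each standard basis vector is a pointwise minimum of finitely many elements of $\varphi(H)$), the divisor class group is $\mathbf q(D)/\mathbf q(\varphi(H))$, where $\mathbf q$ denotes the quotient group; it is independent of the choice of divisor theory. *)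

theory Defs
  imports "HOL-Algebra.Free_Abelian_Groups" "HOL-Library.Function_Algebras"
begin

text \<open>A graph (V,E,r): vertices of type 'v, edges of type 'e (so V and E are disjoint),
  r assigns to each edge a two-element subset of V. Multiple edges allowed, no loops.\<close>
definition is_graph :: "'v set \<Rightarrow> 'e set \<Rightarrow> ('e \<Rightarrow> 'v set) \<Rightarrow> bool" where
  "is_graph V E r \<longleftrightarrow> finite V \<and> finite E \<and> (\<forall>e\<in>E. r e \<subseteq> V \<and> card (r e) = 2)"

definition isolated_vertices :: "'v set \<Rightarrow> 'e set \<Rightarrow> ('e \<Rightarrow> 'v set) \<Rightarrow> 'v set" where
  "isolated_vertices V E r = {v \<in> V. \<forall>e\<in>E. v \<notin> r e}"

text \<open>Agglomerations: functions on V \<union> E (encoded on the sum type, zero outside V \<union> E)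
  with a(v) \<ge> a(e) whenever v is incident with e. The monoid operation is pointwise addition.\<close>
definition agglomerations :: "'v set \<Rightarrow> 'e set \<Rightarrow> ('e \<Rightarrow> 'v set) \<Rightarrow> ('v + 'e \<Rightarrow> nat) set" where
  "agglomerations V E r =
     {a. (\<forall>v. v \<notin> V \<longrightarrow> a (Inl v) = 0) \<and> (\<forall>e. e \<notin> E \<longrightarrow> a (Inr e) = 0) \<and>
         (\<forall>e\<in>E. \<forall>v\<in>r e. a (Inr e) \<le> a (Inl v))}"

text \<open>Divisor theory of a (commutative, additively written) submonoid H into the free
  monoid \<open>\<nat>\<^sub>0^(I)\<close> = finitely supported functions I \<Rightarrow> nat.\<close>
definition divisor_theory :: "'h::comm_monoid_add set \<Rightarrow> 'i set \<Rightarrow> ('h \<Rightarrow> ('i \<Rightarrow>\<^sub>0 nat)) \<Rightarrow> bool" where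
  "divisor_theory H I \<phi> \<longleftrightarrow>
     (\<forall>a\<in>H. Poly_Mapping.keys (\<phi> a) \<subseteq> I) \<and>
     \<phi> 0 = 0 \<and>
     (\<forall>a\<in>H. \<forall>b\<in>H. \<phi> (a + b) = \<phi> a + \<phi> b) \<and>
     (\<forall>a\<in>H. \<forall>b\<in>H. (\<exists>c. Poly_Mapping.keys c \<subseteq> I \<and> \<phi> b = \<phi> a + c) \<longrightarrow> (\<exists>c\<in>H. b = a + c)) \<and>
     (\<forall>i\<in>I. \<exists>S. finite S \<and> S \<noteq> {} \<and> S \<subseteq> \<phi> ` H \<and>
        (\<forall>j. Poly_Mapping.lookup (Poly_Mapping.single i 1) j = Min ((\<lambda>f. Poly_Mapping.lookup f j) ` S)))"

text \<open>Divisor class group q(D)/q(\<phi>(H)), where q(D) = \<open>\<int>^(I)\<close> is the free abelian group on I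
  and q(\<phi>(H)) is the subgroup generated by \<phi>(H).\<close>
definition divisor_class_group ::
  "'h set \<Rightarrow> 'i set \<Rightarrow> ('h \<Rightarrow> ('i \<Rightarrow>\<^sub>0 nat)) \<Rightarrow> ('i \<Rightarrow>\<^sub>0 int) set monoid" where
  "divisor_class_group H I \<phi> =
     free_Abelian_group I Mod
       generate (free_Abelian_group I) ((\<lambda>a. Poly_Mapping.map int (\<phi> a)) ` H)"

end

theory Submission
  imports Defs
begin


locale cone =
  fixes X :: "'x set" and K :: "'k set" and fac :: "'k \<Rightarrow> ('x \<Rightarrow> int) \<Rightarrow> int"
    and H :: "('x \<Rightarrow> nat) set"
  assumes finK: "finite K"
  and fac_add: "\<And>k x y. fac k (\<lambda>z. x z + y z) = fac k x + fac k y"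
  and fac_smult: "\<And>k c x. fac k (\<lambda>z. c * x z) = c * fac k x"
  and H_eq: "H = {a. (\<forall>z. z \<notin> X \<longrightarrow> a z = 0) \<and> (\<forall>k\<in>K. fac k (\<lambda>z. int (a z)) \<ge> 0)}"
  and nonneg: "\<And>x z. (\<forall>z. z \<notin> X \<longrightarrow> x z = 0) \<Longrightarrow> (\<forall>k\<in>K. fac k x \<ge> 0) \<Longrightarrow> x z \<ge> 0"
  and sep: "\<And>k k'. k \<in> K \<Longrightarrow> k' \<in> K \<Longrightarrow>
     \<exists>s\<in>H. fac k (\<lambda>z. int (s z)) = 1 \<and> (k' \<noteq> k \<longrightarrow> fac k' (\<lambda>z. int (s z)) = 0)"
begin

definition F :: "'k \<Rightarrow> ('x \<Rightarrow> nat) \<Rightarrow> int" where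
  "F k a = fac k (\<lambda>z. int (a z))"

lemma fac_zero: "fac k (\<lambda>z. 0) = 0"
  using fac_smult[of k 0 "\<lambda>z. 0"] by simp

lemma fac_minus: "fac k (\<lambda>z. x z - y z) = fac k x - fac k y"
proof -
  have "fac k (\<lambda>z. x z + (-1) * y z) = fac k x + (-1) * fac k y"
    by (simp only: fac_add fac_smult)
  moreover have "(\<lambda>z. x z + (-1) * y z) = (\<lambda>z. x z - y z)" by simp
  ultimately show ?thesis by simp
qed

lemma fac_sum: "finite A \<Longrightarrow> fac k (\<lambda>z. \<Sum>j\<in>A. g j z) = (\<Sum>j\<in>A. fac k (g j))"
proof (induction A rule: finite_induct)
  case empty
  then show ?case by (simp add: fac_zero)
next
  case (insert a A)
  then show ?case by (simp add: fac_add)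
qed

lemma F_add: "F k (a + b) = F k a + F k b"
  unfolding F_def by (simp add: fac_add)

lemma F_smult: "F k (\<lambda>z. n * a z) = int n * F k a"
  unfolding F_def by (simp add: fac_smult)

lemma F_sum: "finite A \<Longrightarrow> F k (\<lambda>z. \<Sum>j\<in>A. g j z) = (\<Sum>j\<in>A. F k (g j))"
  unfolding F_def by (simp add: fac_sum)

lemma F_zero: "F k 0 = 0"
  unfolding F_def by (simp add: fac_zero)

lemma H_memI: "(\<And>z. z \<notin> X \<Longrightarrow> a z = 0) \<Longrightarrow> (\<And>k. k\<in>K \<Longrightarrow> F k a \<ge> 0) \<Longrightarrow> a \<in> H"
  unfolding H_eq F_def by auto

lemma H_supp: "a \<in> H \<Longrightarrow> z \<notin> X \<Longrightarrow> a z = 0"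
  unfolding H_eq by auto

lemma F_nonneg: "a \<in> H \<Longrightarrow> k \<in> K \<Longrightarrow> F k a \<ge> 0"
  unfolding H_eq F_def by auto

lemma H_add: "a \<in> H \<Longrightarrow> b \<in> H \<Longrightarrow> a + b \<in> H"
  by (rule H_memI) (auto simp: H_supp F_add intro: add_nonneg_nonneg F_nonneg)

lemma H_zero: "0 \<in> H"
  by (rule H_memI) (auto simp: F_zero)

lemma H_smult: "a \<in> H \<Longrightarrow> (\<lambda>z. n * a z) \<in> H"
  by (rule H_memI) (auto simp: H_supp F_smult F_nonneg)

lemma H_sum: "finite A \<Longrightarrow> (\<And>j. j \<in> A \<Longrightarrow> g j \<in> H) \<Longrightarrow> (\<lambda>z. \<Sum>j\<in>A. g j z) \<in> H"
  by (rule H_memI) (auto simp: H_supp F_sum intro!: sum_nonneg F_nonneg)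

lemma H_of_int:
  assumes "\<And>z. z \<notin> X \<Longrightarrow> x z = 0" "\<And>k. k \<in> K \<Longrightarrow> fac k x \<ge> 0"
  shows "(\<lambda>z. nat (x z)) \<in> H" "\<And>z. int (nat (x z)) = x z"
proof -
  have nn: "\<And>z. x z \<ge> 0" using nonneg assms by blast
  then have eq: "(\<lambda>z. int (nat (x z))) = x" by auto
  show "\<And>z. int (nat (x z)) = x z" using nn by auto
  have "F k (\<lambda>z. nat (x z)) = fac k x" for k by (simp only: F_def eq)
  then show "(\<lambda>z. nat (x z)) \<in> H"
    by (intro H_memI) (auto simp: assms)
qed

definition sk :: "'k \<Rightarrow> 'k \<Rightarrow> ('x \<Rightarrow> nat)" where
  "sk k k' = (SOME s. s \<in> H \<and> F k s = 1 \<and> (k' \<noteq> k \<longrightarrow> F k' s = 0))"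

lemma sk: assumes "k \<in> K" "k' \<in> K"
  shows "sk k k' \<in> H" "F k (sk k k') = 1" "k' \<noteq> k \<Longrightarrow> F k' (sk k k') = 0"
proof -
  have "\<exists>s. s \<in> H \<and> F k s = 1 \<and> (k' \<noteq> k \<longrightarrow> F k' s = 0)"
    using sep[OF assms] unfolding F_def by blast
  from someI_ex[OF this] show "sk k k' \<in> H" "F k (sk k k') = 1" "k' \<noteq> k \<Longrightarrow> F k' (sk k k') = 0"
    unfolding sk_def by auto
qed

definition yk :: "'k \<Rightarrow> ('x \<Rightarrow> nat)" where
  "yk k = (\<lambda>z. \<Sum>k'\<in>K - {k}. sk k' k z)"

lemma yk: assumes "k \<in> K"
  shows "yk k \<in> H" "F k (yk k) = 0" "\<And>k'. k' \<in> K \<Longrightarrow> k' \<noteq> k \<Longrightarrow> F k' (yk k) \<ge> 1"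
proof -
  show "yk k \<in> H" unfolding yk_def using assms finK by (intro H_sum) (auto intro: sk)
  show "F k (yk k) = 0" unfolding yk_def using assms finK by (simp add: F_sum) (intro sum.neutral, auto intro: sk(3))
  fix k' assume k': "k' \<in> K" "k' \<noteq> k"
  have "F k' (yk k) = (\<Sum>j\<in>K - {k}. F k' (sk j k))" unfolding yk_def using finK by (simp add: F_sum)
  also have "\<dots> = F k' (sk k' k) + (\<Sum>j\<in>K - {k} - {k'}. F k' (sk j k))"
    using finK k' by (subst sum.remove[of _ k']) auto
  also have "\<dots> \<ge> 1" using k' assms
    by (simp add: sk) (intro sum_nonneg F_nonneg sk, auto)
  finally show "F k' (yk k) \<ge> 1" .
qed

definition tint :: "'x \<Rightarrow> nat" where
  "tint = (\<lambda>z. \<Sum>k\<in>K. sk k k z)"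

lemma tint: "tint \<in> H" "\<And>k. k \<in> K \<Longrightarrow> F k tint \<ge> 1"
proof -
  show "tint \<in> H" unfolding tint_def using finK by (intro H_sum) (auto intro: sk)
  fix k assume k: "k \<in> K"
  have "F k tint = (\<Sum>j\<in>K. F k (sk j j))" unfolding tint_def using finK by (simp add: F_sum)
  also have "\<dots> = F k (sk k k) + (\<Sum>j\<in>K - {k}. F k (sk j j))"
    using finK k by (subst sum.remove[of _ k]) auto
  also have "\<dots> \<ge> 1" using k
    by (simp add: sk) (intro sum_nonneg F_nonneg sk, auto)
  finally show "F k tint \<ge> 1" .
qed

lemma dom:
  assumes y: "y \<in> H" and a: "a \<in> H" and cond: "\<And>k. k \<in> K \<Longrightarrow> F k a > 0 \<Longrightarrow> F k y \<ge> 1"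
  shows "\<exists>M w. w \<in> H \<and> a + w = (\<lambda>z. M * y z)"
proof -
  define M where "M = (\<Sum>k\<in>K. nat (F k a))"
  define x where "x = (\<lambda>z. int M * int (y z) - int (a z))"
  have Mge: "int M \<ge> F k a" if "k \<in> K" for k
  proof -
    have "nat (F k a) \<le> M" unfolding M_def using finK that by (intro member_le_sum) auto
    then show ?thesis by linarith
  qed
  have facx: "fac k x = int M * F k y - F k a" for k
    unfolding x_def F_def by (simp add: fac_minus fac_smult)
  have xs: "x z = 0" if "z \<notin> X" for z using that y a by (simp add: x_def H_supp)
  have xf: "fac k x \<ge> 0" if k: "k \<in> K" for k
  proof (cases "F k a > 0")
    case True
    then have "F k y \<ge> 1" using cond k by auto
    then have "int M * F k y \<ge> int M" using mult_left_mono[of 1 "F k y" "int M"] by simp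
    then show ?thesis using Mge[OF k] facx by simp
  next
    case False
    then show ?thesis using facx F_nonneg[OF y k] F_nonneg[OF a k] by simp
  qed
  note hi = H_of_int[OF xs xf, simplified]
  have "a + (\<lambda>z. nat (x z)) = (\<lambda>z. M * y z)"
  proof
    fix z
    have e: "int (nat (x z)) = x z" using hi(2) by simp
    have "int (a z + nat (x z)) = int (M * y z)" by (simp only: of_nat_add e) (simp add: x_def)
    then show "(a + (\<lambda>z. nat (x z))) z = M * y z" by (simp only: of_nat_eq_iff plus_fun_apply)
  qed
  then show ?thesis using hi(1) by blast
qed

lemma diff_rep:
  assumes "\<And>z. z \<notin> X \<Longrightarrow> x z = 0"
  shows "\<exists>h1\<in>H. \<exists>h2\<in>H. \<forall>z. x z = int (h1 z) - int (h2 z)"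
proof -
  define M where "M = (\<Sum>k\<in>K. nat \<bar>fac k x\<bar>)"
  have Mge: "int M \<ge> \<bar>fac k x\<bar>" if "k \<in> K" for k
  proof -
    have "nat \<bar>fac k x\<bar> \<le> M" unfolding M_def using finK that by (intro member_le_sum) auto
    then show ?thesis by linarith
  qed
  define h2 where "h2 = (\<lambda>z. M * tint z)"
  define x1 where "x1 = (\<lambda>z. x z + int (h2 z))"
  have h2H: "h2 \<in> H" unfolding h2_def by (intro H_smult tint)
  have fx1: "fac k x1 = fac k x + int M * F k tint" for k
    unfolding x1_def h2_def F_def by (simp add: fac_add fac_smult)
  have "fac k x1 \<ge> 0" if "k \<in> K" for k
  proof -
    have "int M * F k tint \<ge> int M" using tint(2)[OF that] mult_left_mono[of 1 "F k tint" "int M"] by simp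
    then show ?thesis using Mge[OF that] fx1[of k] by linarith
  qed
  moreover have "x1 z = 0" if "z \<notin> X" for z
    using that assms h2H by (simp add: x1_def H_supp)
  ultimately have hi: "(\<lambda>z. nat (x1 z)) \<in> H" "\<And>z. int (nat (x1 z)) = x1 z"
    using H_of_int by blast+
  show ?thesis
    by (rule bexI[OF _ hi(1)], rule bexI[OF _ h2H]) (unfold hi(2), simp add: x1_def)
qed

lemma F_of_int: "(\<And>z. x z \<ge> 0) \<Longrightarrow> F k (\<lambda>z. nat (x z)) = fac k x"
proof -
  assume "\<And>z. x z \<ge> 0"
  then have "(\<lambda>z. int (nat (x z))) = x" by auto
  then show ?thesis by (simp only: F_def)
qed

end

context cone begin

lemma exists_dt: "\<exists>(I :: nat set) \<phi>. divisor_theory H I \<phi>"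
proof -
  obtain \<kappa> where \<kappa>: "bij_betw \<kappa> {..<card K} K"
    using ex_bij_betw_nat_finite[OF finK] by (auto simp: atLeast0LessThan)
  define \<kappa>' where "\<kappa>' = inv_into {..<card K} \<kappa>"
  have \<kappa>in: "m < card K \<Longrightarrow> \<kappa> m \<in> K" for m using \<kappa> by (auto simp: bij_betw_def)
  have \<kappa>'in: "k \<in> K \<Longrightarrow> \<kappa>' k < card K \<and> \<kappa> (\<kappa>' k) = k" for k
    using \<kappa> unfolding \<kappa>'_def by (metis bij_betw_inv_into_right bij_betw_imp_surj_on inv_into_into lessThan_iff)
  have \<kappa>inj: "m < card K \<Longrightarrow> j < card K \<Longrightarrow> \<kappa> m = \<kappa> j \<Longrightarrow> m = j" for m j
    using \<kappa> unfolding bij_betw_def inj_on_def by auto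
  define g where "g a = (\<lambda>m. if m < card K then nat (F (\<kappa> m) a) else 0)" for a
  define \<phi> where "\<phi> a = Abs_poly_mapping (g a)" for a
  have fin: "finite {m. g a m \<noteq> 0}" for a
    by (rule finite_subset[of _ "{..<card K}"]) (auto simp: g_def split: if_splits)
  have lk: "Poly_Mapping.lookup (\<phi> a) = g a" for a unfolding \<phi>_def by (rule lookup_Abs_poly_mapping[OF fin])
  have P1: "Poly_Mapping.keys (\<phi> a) \<subseteq> {..<card K}" for a
  proof
    fix m assume "m \<in> Poly_Mapping.keys (\<phi> a)"
    then have "g a m \<noteq> 0" by (simp add: in_keys_iff lk)
    then show "m \<in> {..<card K}" unfolding g_def by (cases "m < card K") auto
  qed
  have P2: "\<phi> 0 = 0"
  proof (rule poly_mapping_eqI)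
    fix m show "Poly_Mapping.lookup (\<phi> 0) m = Poly_Mapping.lookup 0 m"
      by (simp only: lk) (simp add: g_def F_zero)
  qed
  have P3: "\<phi> (a + b) = \<phi> a + \<phi> b" if ab: "a \<in> H" "b \<in> H" for a b
    proof (rule poly_mapping_eqI)
      fix m
      show "Poly_Mapping.lookup (\<phi> (a + b)) m = Poly_Mapping.lookup (\<phi> a + \<phi> b) m"
      proof (cases "m < card K")
        case True
        have nn: "F (\<kappa> m) a \<ge> 0" "F (\<kappa> m) b \<ge> 0" using F_nonneg[OF ab(1) \<kappa>in[OF True]] F_nonneg[OF ab(2) \<kappa>in[OF True]] by auto
        have "Poly_Mapping.lookup (\<phi> (a + b)) m = g (a + b) m" by (simp only: lk)
        also have "\<dots> = nat (F (\<kappa> m) (a + b))" using True by (simp add: g_def)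
        also have "\<dots> = nat (F (\<kappa> m) a + F (\<kappa> m) b)" by (simp only: F_add)
        also have "\<dots> = nat (F (\<kappa> m) a) + nat (F (\<kappa> m) b)" using nn by (rule nat_add_distrib)
        also have "\<dots> = g a m + g b m" using True by (simp add: g_def)
        also have "\<dots> = Poly_Mapping.lookup (\<phi> a + \<phi> b) m" by (simp only: lk lookup_add)
        finally show ?thesis .
      next
        case False then show ?thesis by (simp add: lk g_def lookup_add)
      qed
    qed
  have P4: "\<exists>c'\<in>H. b = a + c'" if ab: "a \<in> H" "b \<in> H" and
      c: "Poly_Mapping.keys c \<subseteq> {..<card K} \<and> \<phi> b = \<phi> a + c" for a b c
    proof -
      define x where "x = (\<lambda>z. int (b z) - int (a z))"
      have xs: "x z = 0" if "z \<notin> X" for z using that ab by (simp add: x_def H_supp)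
      have xf: "fac k x \<ge> 0" if k: "k \<in> K" for k
      proof -
        have "Poly_Mapping.lookup (\<phi> b) (\<kappa>' k) = Poly_Mapping.lookup (\<phi> a + c) (\<kappa>' k)" using c by simp
        then have "nat (F k b) \<ge> nat (F k a)" using \<kappa>'in[OF k] by (simp add: lk g_def lookup_add)
        moreover have "fac k x = F k b - F k a" unfolding x_def F_def by (simp add: fac_minus)
        ultimately show ?thesis using F_nonneg[OF ab(1) k] F_nonneg[OF ab(2) k] by linarith
      qed
      have xnn: "x z \<ge> 0" for z using nonneg xs xf by blast
      have "(\<lambda>z. nat (x z)) \<in> H" using H_of_int[OF xs xf] by simp
      moreover have "b = a + (\<lambda>z. nat (x z))"
      proof
        fix z show "b z = (a + (\<lambda>z. nat (x z))) z" using xnn[of z] by (simp add: x_def)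
      qed
      ultimately show ?thesis by blast
    qed
  have P5: "\<exists>S. finite S \<and> S \<noteq> {} \<and> S \<subseteq> \<phi> ` H \<and>
        (\<forall>j. Poly_Mapping.lookup (Poly_Mapping.single m 1) j = Min ((\<lambda>f. Poly_Mapping.lookup f j) ` S))"
      if m: "m \<in> {..<card K}" for m
    proof -
      define k where "k = \<kappa> m"
      have k: "k \<in> K" using \<kappa>in m by (simp add: k_def)
      define S where "S = \<phi> ` (sk k ` K)"
      have img: "(\<lambda>f. Poly_Mapping.lookup f j) ` S = (\<lambda>k'. g (sk k k') j) ` K" for j
        unfolding S_def by (auto simp: lk image_image)
      have "Poly_Mapping.lookup (Poly_Mapping.single m 1) j = Min ((\<lambda>f. Poly_Mapping.lookup f j) ` S)" for j
      proof -
        have Kne: "K \<noteq> {}" using k by auto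
        show ?thesis
        proof (cases "j < card K")
          case False
          then have "j \<noteq> m" using m by auto
          then show ?thesis using False Kne finK by (simp add: img lookup_single g_def)
        next
          case True
          have jj: "\<kappa> j \<in> K" using \<kappa>in True by simp
          show ?thesis
          proof (cases "j = m")
            case True
            have "\<forall>k'\<in>K. g (sk k k') j = 1" using True m sk(2)[OF k] by (simp add: g_def k_def)
            then have "(\<lambda>k'. g (sk k k') j) ` K = {1}" using Kne by auto
            then show ?thesis using True by (simp add: img lookup_single)
          next
            case False
            then have ne: "\<kappa> j \<noteq> k" using \<kappa>inj[OF True] m by (auto simp: k_def)
            have "Min ((\<lambda>k'. g (sk k k') j) ` K) = 0"
            proof (rule Min_eqI)
              show "finite ((\<lambda>k'. g (sk k k') j) ` K)" using finK by simp
              show "(0::nat) \<le> y" for y by simp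
              show "0 \<in> (\<lambda>k'. g (sk k k') j) ` K"
                using jj ne True sk(3)[OF k jj] by (intro image_eqI[of _ _ "\<kappa> j"]) (auto simp: g_def)
            qed
            then show ?thesis using False by (simp add: img lookup_single)
          qed
        qed
      qed
      moreover have "finite S" "S \<noteq> {}" "S \<subseteq> \<phi> ` H" using finK k sk(1)[OF k] by (auto simp: S_def)
      ultimately show ?thesis by blast
    qed
  have "divisor_theory H {..<card K} \<phi>"
    unfolding divisor_theory_def
    apply (intro conjI)
    subgoal using P1 by blast
    subgoal by (rule P2)
    subgoal using P3 by blast
    subgoal by (intro ballI impI, elim exE, rule P4, assumption+)
    subgoal by (intro ballI, rule P5, assumption)
    done
  then show ?thesis by blast
qed

end

locale divthy = cone X K fac H
  for X :: "'x set" and K :: "'k set" and fac :: "'k \<Rightarrow> ('x \<Rightarrow> int) \<Rightarrow> int"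
    and H :: "('x \<Rightarrow> nat) set" +
  fixes I :: "'i set" and \<phi> :: "('x \<Rightarrow> nat) \<Rightarrow> ('i \<Rightarrow>\<^sub>0 nat)"
  assumes dt: "divisor_theory H I \<phi>"
begin

definition L :: "'i \<Rightarrow> ('x \<Rightarrow> nat) \<Rightarrow> nat" where
  "L i a = Poly_Mapping.lookup (\<phi> a) i"

lemma DT1: "a \<in> H \<Longrightarrow> Poly_Mapping.keys (\<phi> a) \<subseteq> I"
  using dt unfolding divisor_theory_def by blast
lemma DT2: "\<phi> 0 = 0"
  using dt unfolding divisor_theory_def by blast
lemma DT3: "a \<in> H \<Longrightarrow> b \<in> H \<Longrightarrow> \<phi> (a + b) = \<phi> a + \<phi> b"
  using dt unfolding divisor_theory_def by blast
lemma DT4: "a \<in> H \<Longrightarrow> b \<in> H \<Longrightarrow> Poly_Mapping.keys c \<subseteq> I \<Longrightarrow> \<phi> b = \<phi> a + c \<Longrightarrow> \<exists>c\<in>H. b = a + c"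
  using dt unfolding divisor_theory_def by blast
lemma DT5: "i \<in> I \<Longrightarrow> \<exists>S. finite S \<and> S \<noteq> {} \<and> S \<subseteq> \<phi> ` H \<and>
        (\<forall>j. Poly_Mapping.lookup (Poly_Mapping.single i 1) j = Min ((\<lambda>f. Poly_Mapping.lookup f j) ` S))"
  using dt unfolding divisor_theory_def by blast

lemma L_out: "a \<in> H \<Longrightarrow> i \<notin> I \<Longrightarrow> L i a = 0"
  unfolding L_def by (meson DT1 in_keys_iff subsetD)

lemma min_one: assumes "i \<in> I" shows "\<exists>h\<in>H. L i h = 1"
proof -
  obtain S where S: "finite S" "S \<noteq> {}" "S \<subseteq> \<phi> ` H"
    "\<And>j. Poly_Mapping.lookup (Poly_Mapping.single i 1) j = Min ((\<lambda>f. Poly_Mapping.lookup f j) ` S)"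
    using DT5[OF assms] by blast
  have "Min ((\<lambda>f. Poly_Mapping.lookup f i) ` S) = 1" using S(4)[of i] by (simp add: lookup_single)
  moreover have "Min ((\<lambda>f. Poly_Mapping.lookup f i) ` S) \<in> (\<lambda>f. Poly_Mapping.lookup f i) ` S"
    using S by (intro Min_in) auto
  ultimately obtain g where "g \<in> S" "Poly_Mapping.lookup g i = 1" by auto
  then show ?thesis using S(3) unfolding L_def by auto
qed

lemma min_sep: assumes "i \<in> I" "j \<noteq> i" shows "\<exists>h\<in>H. L i h \<ge> 1 \<and> L j h = 0"
proof -
  obtain S where S: "finite S" "S \<noteq> {}" "S \<subseteq> \<phi> ` H"
    "\<And>j. Poly_Mapping.lookup (Poly_Mapping.single i 1) j = Min ((\<lambda>f. Poly_Mapping.lookup f j) ` S)"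
    using DT5[OF assms(1)] by blast
  have "Min ((\<lambda>f. Poly_Mapping.lookup f j) ` S) = 0" using S(4)[of j] assms(2) by (simp add: lookup_single)
  moreover have "Min ((\<lambda>f. Poly_Mapping.lookup f j) ` S) \<in> (\<lambda>f. Poly_Mapping.lookup f j) ` S"
    using S by (intro Min_in) auto
  ultimately obtain g where g: "g \<in> S" "Poly_Mapping.lookup g j = 0" by auto
  have "Min ((\<lambda>f. Poly_Mapping.lookup f i) ` S) = 1" using S(4)[of i] by (simp add: lookup_single)
  moreover have "Min ((\<lambda>f. Poly_Mapping.lookup f i) ` S) \<le> Poly_Mapping.lookup g i"
    using S g by (intro Min_le) auto
  ultimately have "Poly_Mapping.lookup g i \<ge> 1" by simp
  then show ?thesis using g S(3) unfolding L_def by auto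
qed

lemma L_add: "a \<in> H \<Longrightarrow> b \<in> H \<Longrightarrow> L i (a + b) = L i a + L i b"
  unfolding L_def by (simp add: DT3 lookup_add)

lemma L_zero: "L i 0 = 0"
  unfolding L_def by (simp add: DT2)

lemma L_smult: assumes "a \<in> H" shows "L i (\<lambda>z. n * a z) = n * L i a"
proof (induction n)
  case 0
  then show ?case using L_zero by (simp add: zero_fun_def)
next
  case (Suc n)
  have "(\<lambda>z. Suc n * a z) = a + (\<lambda>z. n * a z)" by (auto simp: plus_fun_def)
  then show ?case using Suc assms by (simp add: L_add H_smult)
qed

lemma L_sum: "finite A \<Longrightarrow> (\<And>j. j \<in> A \<Longrightarrow> g j \<in> H) \<Longrightarrow> L i (\<lambda>z. \<Sum>j\<in>A. g j z) = (\<Sum>j\<in>A. L i (g j))"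
proof (induction A rule: finite_induct)
  case empty
  then show ?case using L_zero by (simp add: zero_fun_def)
next
  case (insert a A)
  have "(\<lambda>z. \<Sum>j\<in>insert a A. g j z) = g a + (\<lambda>z. \<Sum>j\<in>A. g j z)"
    using insert by (auto simp: plus_fun_def)
  then show ?case using insert by (simp add: L_add H_sum)
qed

lemma dom_L:
  assumes y: "y \<in> H" and a: "a \<in> H" and cond: "\<And>k. k \<in> K \<Longrightarrow> F k a > 0 \<Longrightarrow> F k y \<ge> 1"
    and Ly: "L i y = 0"
  shows "L i a = 0"
proof -
  obtain M w where w: "w \<in> H" "a + w = (\<lambda>z. M * y z)" using dom[OF y a cond] by blast
  have "L i a + L i w = L i (\<lambda>z. M * y z)" using L_add[OF a w(1)] w(2) by simp
  also have "\<dots> = 0" using L_smult[OF y] Ly by simp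
  finally show ?thesis by simp
qed

lemma lemmaF:
  assumes k: "k \<in> K" and Ly: "L i (yk k) = 0" and a: "a \<in> H"
  shows "L i a = nat (F k a) * L i (sk k k)"
proof -
  define p where "p = sk k k"
  define y where "y = yk k"
  have pH: "p \<in> H" and Fp: "F k p = 1" using sk[OF k k] by (auto simp: p_def)
  have yH: "y \<in> H" and Fy: "F k y = 0" and Fy1: "\<And>k'. k' \<in> K \<Longrightarrow> k' \<noteq> k \<Longrightarrow> F k' y \<ge> 1"
    using yk[OF k] by (auto simp: y_def)
  define m where "m = nat (F k a)"
  have Fam: "F k a = int m" using F_nonneg[OF a k] by (simp add: m_def)
  define N where "N = (\<Sum>k'\<in>K. nat (int m * F k' p))"
  have Nge: "int N \<ge> int m * F k' p" if "k' \<in> K" for k'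
  proof -
    have "nat (int m * F k' p) \<le> N" unfolding N_def using finK that by (intro member_le_sum) auto
    then show ?thesis by linarith
  qed
  define x where "x = (\<lambda>z. int (a z) + int N * int (y z) - int m * int (p z))"
  have facx: "fac k' x = F k' a + int N * F k' y - int m * F k' p" for k'
    unfolding x_def F_def by (simp add: fac_minus fac_add fac_smult)
  have xk: "fac k x = 0" using facx[of k] Fam Fy Fp by simp
  have xs: "x z = 0" if "z \<notin> X" for z using that a yH pH by (simp add: x_def H_supp)
  have xf: "fac k' x \<ge> 0" if k': "k' \<in> K" for k'
  proof (cases "k' = k")
    case True then show ?thesis using xk by simp
  next
    case False
    then have "F k' y \<ge> 1" using Fy1 k' by auto
    then have "int N * F k' y \<ge> int N" using mult_left_mono[of 1 "F k' y" "int N"] by simp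
    then show ?thesis using Nge[OF k'] facx[of k'] F_nonneg[OF a k'] by simp
  qed
  have xnn: "x z \<ge> 0" for z using nonneg xs xf by blast
  define w where "w = (\<lambda>z. nat (x z))"
  have wH: "w \<in> H" unfolding w_def using H_of_int[OF xs xf] by simp
  have Fw: "F k' w = fac k' x" for k' unfolding w_def by (rule F_of_int[OF xnn])
  have Lw: "L i w = 0"
  proof (rule dom_L[OF yH wH _ Ly[folded y_def]])
    fix k' assume "k' \<in> K" "F k' w > 0"
    then have "k' \<noteq> k" using Fw xk by auto
    then show "F k' y \<ge> 1" using Fy1 \<open>k' \<in> K\<close> by auto
  qed
  have eq: "a + (\<lambda>z. N * y z) = (\<lambda>z. m * p z) + w"
  proof
    fix z
    have "int (a z + N * y z) = int (m * p z + w z)" using xnn[of z] by (simp add: w_def x_def)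
    then show "(a + (\<lambda>z. N * y z)) z = ((\<lambda>z. m * p z) + w) z" by (simp only: of_nat_eq_iff plus_fun_apply)
  qed
  have "L i a + N * L i y = m * L i p + L i w"
    using arg_cong[OF eq, of "L i"] by (simp add: L_add L_smult a yH pH wH H_smult)
  then show ?thesis using Ly Lw by (simp add: m_def p_def y_def)
qed

lemma facet_realized: assumes k: "k \<in> K" shows "\<exists>i\<in>I. \<forall>a\<in>H. L i a = nat (F k a)"
proof -
  define p where "p = sk k k"
  define y where "y = yk k"
  have pH: "p \<in> H" and Fp: "F k p = 1" using sk[OF k k] by (auto simp: p_def)
  have yH: "y \<in> H" and Fy: "F k y = 0" using yk[OF k] by (auto simp: y_def)
  define M where "M = (\<Sum>i\<in>Poly_Mapping.keys (\<phi> p). L i p)"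
  have MyH: "(\<lambda>z. M * y z) \<in> H" using yH by (rule H_smult)
  have "\<exists>i\<in>I. L i (\<lambda>z. M * y z) < L i p"
  proof (rule ccontr)
    assume "\<not> ?thesis"
    then have le: "\<And>i. i \<in> I \<Longrightarrow> L i p \<le> L i (\<lambda>z. M * y z)" by auto
    define c where "c = \<phi> (\<lambda>z. M * y z) - \<phi> p"
    have kc: "Poly_Mapping.keys c \<subseteq> I"
    proof
      fix i assume "i \<in> Poly_Mapping.keys c"
      then have "Poly_Mapping.lookup (\<phi> (\<lambda>z. M * y z)) i \<noteq> 0"
        unfolding c_def by (auto simp: in_keys_iff lookup_minus)
      then show "i \<in> I" using DT1[OF MyH] by (auto simp: in_keys_iff)
    qed
    have "\<phi> (\<lambda>z. M * y z) = \<phi> p + c"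
    proof (rule poly_mapping_eqI)
      fix i
      show "Poly_Mapping.lookup (\<phi> (\<lambda>z. M * y z)) i = Poly_Mapping.lookup (\<phi> p + c) i"
      proof (cases "i \<in> I")
        case True
        then show ?thesis using le[OF True] unfolding c_def L_def by (simp add: lookup_add lookup_minus)
      next
        case False
        then show ?thesis using L_out[OF MyH False] L_out[OF pH False] unfolding c_def L_def
          by (simp add: lookup_add lookup_minus)
      qed
    qed
    from DT4[OF pH MyH kc this] obtain c' where c': "c' \<in> H" "(\<lambda>z. M * y z) = p + c'" by blast
    have "F k (\<lambda>z. M * y z) = 0" using Fy by (simp add: F_smult)
    moreover have "F k (p + c') = 1 + F k c'" using Fp by (simp add: F_add)
    moreover have "F k c' \<ge> 0" using F_nonneg[OF c'(1) k] .
    ultimately show False using c'(2) by simp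
  qed
  then obtain i where i: "i \<in> I" "L i (\<lambda>z. M * y z) < L i p" by blast
  have LpM: "L i p \<le> M"
  proof (cases "i \<in> Poly_Mapping.keys (\<phi> p)")
    case True
    then show ?thesis unfolding M_def by (intro member_le_sum) auto
  next
    case False
    then show ?thesis unfolding L_def by (simp add: in_keys_iff)
  qed
  have Ly: "L i y = 0"
  proof (rule ccontr)
    assume "L i y \<noteq> 0"
    then have "M * L i y \<ge> M" by simp
    then show False using i(2) LpM L_smult[OF yH, of i M] by linarith
  qed
  have LF: "\<forall>a\<in>H. L i a = nat (F k a) * L i p"
    using lemmaF[OF k Ly[unfolded y_def]] by (simp add: p_def)
  obtain h where h: "h \<in> H" "L i h = 1" using min_one[OF i(1)] by blast
  have "nat (F k h) * L i p = 1" using LF h by auto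
  then have "L i p = 1" by simp
  then show ?thesis using LF i(1) by auto
qed

lemma form_is_facet: assumes i: "i \<in> I" shows "\<exists>k\<in>K. \<forall>a\<in>H. L i a = nat (F k a)"
proof -
  obtain h1 where h1: "h1 \<in> H" "L i h1 = 1" using min_one[OF i] by blast
  have "\<exists>k\<in>K. \<forall>s\<in>H. L i s = 0 \<longrightarrow> F k s = 0"
  proof (rule ccontr)
    assume "\<not> ?thesis"
    then have ex: "\<And>k. k \<in> K \<Longrightarrow> \<exists>s. s \<in> H \<and> L i s = 0 \<and> F k s \<noteq> 0" by blast
    define sf where "sf k = (SOME s. s \<in> H \<and> L i s = 0 \<and> F k s \<noteq> 0)" for k
    have sf: "sf k \<in> H" "L i (sf k) = 0" "F k (sf k) \<noteq> 0" if "k \<in> K" for k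
      using someI_ex[OF ex[OF that]] unfolding sf_def by auto
    define t where "t = (\<lambda>z. \<Sum>k\<in>K. sf k z)"
    have tH: "t \<in> H" unfolding t_def using finK sf by (intro H_sum) auto
    have Lt: "L i t = 0" unfolding t_def using finK sf by (simp add: L_sum)
    have Ft: "F k t \<ge> 1" if k: "k \<in> K" for k
    proof -
      have "F k t = (\<Sum>j\<in>K. F k (sf j))" unfolding t_def using finK by (simp add: F_sum)
      also have "\<dots> = F k (sf k) + (\<Sum>j\<in>K - {k}. F k (sf j))"
        using finK k by (subst sum.remove[of _ k]) auto
      also have "\<dots> \<ge> 1"
      proof -
        have "F k (sf k) \<ge> 0" using F_nonneg sf k by blast
        then have "F k (sf k) \<ge> 1" using sf(3)[OF k] by linarith
        moreover have "(\<Sum>j\<in>K - {k}. F k (sf j)) \<ge> 0" using k sf F_nonneg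
          by (intro sum_nonneg) auto
        ultimately show ?thesis by linarith
      qed
      finally show ?thesis .
    qed
    have "L i h1 = 0" by (rule dom_L[OF tH h1(1) _ Lt]) (use Ft in auto)
    then show False using h1 by simp
  qed
  then obtain k where k: "k \<in> K" "\<And>s. s \<in> H \<Longrightarrow> L i s = 0 \<Longrightarrow> F k s = 0" by blast
  obtain j where j: "j \<in> I" "\<forall>a\<in>H. L j a = nat (F k a)" using facet_realized[OF k(1)] by blast
  show ?thesis
  proof (cases "j = i")
    case True then show ?thesis using j k by auto
  next
    case False
    obtain h where h: "h \<in> H" "L j h \<ge> 1" "L i h = 0" using min_sep[OF j(1) False[symmetric]] by blast
    have "L j h = 0" using j(2) k(2)[OF h(1) h(3)] h(1) by simp
    then show ?thesis using h by simp
  qed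
qed

lemma uniq: assumes "k \<in> K" "k' \<in> K" "\<forall>a\<in>H. nat (F k a) = nat (F k' a)" shows "k = k'"
proof (rule ccontr)
  assume ne: "k \<noteq> k'"
  have a: "F k (yk k) = 0" "F k' (yk k) \<ge> 1" using yk[OF assms(1)] assms(2) ne by auto
  have "nat (F k (yk k)) = nat (F k' (yk k))" using assms(3) yk(1)[OF assms(1)] by blast
  then show False using a by simp
qed

lemma exists_sigma: "\<exists>\<sigma>. bij_betw \<sigma> I K \<and> (\<forall>i\<in>I. \<forall>a\<in>H. int (L i a) = F (\<sigma> i) a)"
proof -
  define \<sigma> where "\<sigma> i = (SOME k. k \<in> K \<and> (\<forall>a\<in>H. L i a = nat (F k a)))" for i
  have s0: "\<sigma> i \<in> K \<and> (\<forall>a\<in>H. L i a = nat (F (\<sigma> i) a))" if "i \<in> I" for i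
  proof -
    have ex: "\<exists>k. k \<in> K \<and> (\<forall>a\<in>H. L i a = nat (F k a))" using form_is_facet[OF that] by blast
    show ?thesis unfolding \<sigma>_def by (rule someI_ex[OF ex])
  qed
  have s: "\<sigma> i \<in> K" "\<forall>a\<in>H. L i a = nat (F (\<sigma> i) a)" if "i \<in> I" for i
    using s0[OF that] by blast+
  have inj: "inj_on \<sigma> I"
  proof (rule inj_onI, rule ccontr)
    fix i j assume ij: "i \<in> I" "j \<in> I" "\<sigma> i = \<sigma> j" "i \<noteq> j"
    obtain h where h: "h \<in> H" "L i h \<ge> 1" "L j h = 0" using min_sep[OF ij(1) ij(4)[symmetric]] by blast
    then show False using s(2)[OF ij(1)] s(2)[OF ij(2)] ij(3) by auto
  qed
  have img: "\<sigma> ` I = K"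
  proof
    show "\<sigma> ` I \<subseteq> K" using s by auto
    show "K \<subseteq> \<sigma> ` I"
    proof
      fix k assume k: "k \<in> K"
      obtain i where i: "i \<in> I" "\<forall>a\<in>H. L i a = nat (F k a)" using facet_realized[OF k] by blast
      have "\<sigma> i = k" using uniq[OF s(1)[OF i(1)] k] s(2)[OF i(1)] i(2) by auto
      then show "k \<in> \<sigma> ` I" using i(1) by auto
    qed
  qed
  have "int (L i a) = F (\<sigma> i) a" if "i \<in> I" "a \<in> H" for i a
    using s[OF that(1)] that(2) F_nonneg[OF that(2) s(1)[OF that(1)]] by simp
  then show ?thesis using inj img unfolding bij_betw_def by blast
qed

end



datatype ('v,'e) facet = FE 'e | FI 'v 'e | FV 'v

fun gfac :: "('v,'e) facet \<Rightarrow> ('v + 'e \<Rightarrow> int) \<Rightarrow> int" where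
  "gfac (FE e) x = x (Inr e)"
| "gfac (FI v e) x = x (Inl v) - x (Inr e)"
| "gfac (FV v) x = x (Inl v)"

definition gInc :: "'v set \<Rightarrow> 'e set \<Rightarrow> ('e \<Rightarrow> 'v set) \<Rightarrow> ('v,'e) facet set" where
  "gInc V E r = {FI v e | v e. e \<in> E \<and> v \<in> r e}"

definition gK :: "'v set \<Rightarrow> 'e set \<Rightarrow> ('e \<Rightarrow> 'v set) \<Rightarrow> ('v,'e) facet set" where
  "gK V E r = FE ` E \<union> gInc V E r \<union> FV ` isolated_vertices V E r"

definition gX :: "'v set \<Rightarrow> 'e set \<Rightarrow> ('v + 'e) set" where
  "gX V E = Inl ` V \<union> Inr ` E"

definition ind :: "('v + 'e) set \<Rightarrow> ('v + 'e \<Rightarrow> nat)" where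
  "ind C = (\<lambda>z. if z \<in> C then 1 else 0)"

lemma gfac_ind: "gfac k (\<lambda>z. int (ind C z)) =
   (case k of FE e \<Rightarrow> (if Inr e \<in> C then 1 else 0)
     | FI v e \<Rightarrow> (if Inl v \<in> C then 1 else 0) - (if Inr e \<in> C then 1 else 0)
     | FV v \<Rightarrow> (if Inl v \<in> C then 1 else 0))"
  by (cases k) (auto simp: ind_def)

locale gr =
  fixes V :: "'v set" and E :: "'e set" and r :: "'e \<Rightarrow> 'v set"
  assumes g: "is_graph V E r"
begin

lemma finV: "finite V" and finE: "finite E" and rV: "e \<in> E \<Longrightarrow> r e \<subseteq> V"
  and rc: "e \<in> E \<Longrightarrow> card (r e) = 2"
  using g unfolding is_graph_def by auto

lemma finr: "e \<in> E \<Longrightarrow> finite (r e)"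
  using rc by (metis card.infinite zero_neq_numeral)

lemma iso_iff: "v \<in> isolated_vertices V E r \<longleftrightarrow> v \<in> V \<and> (\<forall>e\<in>E. v \<notin> r e)"
  unfolding isolated_vertices_def by auto

lemma Inc_eq: "gInc V E r = (\<Union>e\<in>E. (\<lambda>v. FI v e) ` r e)"
  unfolding gInc_def by auto

lemma finK: "finite (gK V E r)"
proof -
  have "finite (gInc V E r)" unfolding Inc_eq using finE finr by auto
  moreover have "finite (isolated_vertices V E r)"
    using finV by (rule finite_subset[rotated]) (auto simp: iso_iff)
  ultimately show ?thesis unfolding gK_def using finE by auto
qed

lemma memK: "k \<in> gK V E r \<longleftrightarrow>
  (case k of FE e \<Rightarrow> e \<in> E | FI v e \<Rightarrow> e \<in> E \<and> v \<in> r e | FV v \<Rightarrow> v \<in> isolated_vertices V E r)"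
  unfolding gK_def gInc_def by (cases k) auto

lemma H_eq: "agglomerations V E r =
   {a. (\<forall>z. z \<notin> gX V E \<longrightarrow> a z = 0) \<and> (\<forall>k\<in>gK V E r. gfac k (\<lambda>z. int (a z)) \<ge> 0)}"
proof (intro Set.set_eqI iffI)
  fix a assume a: "a \<in> agglomerations V E r"
  have "a z = 0" if "z \<notin> gX V E" for z
    using a that unfolding agglomerations_def gX_def by (cases z) auto
  moreover have "gfac k (\<lambda>z. int (a z)) \<ge> 0" if "k \<in> gK V E r" for k
    using a that unfolding agglomerations_def by (cases k) (auto simp: memK)
  ultimately show "a \<in> {a. (\<forall>z. z \<notin> gX V E \<longrightarrow> a z = 0) \<and> (\<forall>k\<in>gK V E r. gfac k (\<lambda>z. int (a z)) \<ge> 0)}"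
    by blast
next
  fix a assume a: "a \<in> {a. (\<forall>z. z \<notin> gX V E \<longrightarrow> a z = 0) \<and> (\<forall>k\<in>gK V E r. gfac k (\<lambda>z. int (a z)) \<ge> 0)}"
  have "a (Inr e) \<le> a (Inl v)" if "e \<in> E" "v \<in> r e" for e v
  proof -
    have "FI v e \<in> gK V E r" using that by (simp add: memK)
    then show ?thesis using a by force
  qed
  moreover have "a (Inl v) = 0" if "v \<notin> V" for v using a that by (auto simp: gX_def)
  moreover have "a (Inr e) = 0" if "e \<notin> E" for e using a that by (auto simp: gX_def)
  ultimately show "a \<in> agglomerations V E r" unfolding agglomerations_def by blast
qed

lemma nonneg_g:
  assumes s: "\<forall>z. z \<notin> gX V E \<longrightarrow> x z = 0" and f: "\<forall>k\<in>gK V E r. gfac k x \<ge> 0"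
  shows "x z \<ge> 0"
proof (cases z)
  case (Inl v)
  show ?thesis
  proof (cases "v \<in> V")
    case False then show ?thesis using s Inl by (auto simp: gX_def)
  next
    case True
    show ?thesis
    proof (cases "v \<in> isolated_vertices V E r")
      case True
      then have "FV v \<in> gK V E r" by (simp add: memK)
      then show ?thesis using f Inl by force
    next
      case False
      then obtain e where e: "e \<in> E" "v \<in> r e" using True by (auto simp: iso_iff)
      then have "FI v e \<in> gK V E r" "FE e \<in> gK V E r" by (auto simp: memK)
      then have "x (Inl v) - x (Inr e) \<ge> 0" "x (Inr e) \<ge> 0" using f by force+
      then show ?thesis using Inl by simp
    qed
  qed
next
  case (Inr e)
  show ?thesis
  proof (cases "e \<in> E")
    case False then show ?thesis using s Inr by (auto simp: gX_def)
  next
    case True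
    then have "FE e \<in> gK V E r" by (simp add: memK)
    then show ?thesis using f Inr by force
  qed
qed

lemma ind_H: "(\<And>z. z \<in> C \<Longrightarrow> z \<in> gX V E) \<Longrightarrow> (\<And>e v. e \<in> E \<Longrightarrow> v \<in> r e \<Longrightarrow> Inr e \<in> C \<Longrightarrow> Inl v \<in> C)
   \<Longrightarrow> ind C \<in> agglomerations V E r"
  unfolding agglomerations_def ind_def gX_def by auto

lemma sep_g:
  assumes k: "k \<in> gK V E r" and k': "k' \<in> gK V E r"
  shows "\<exists>s\<in>agglomerations V E r. gfac k (\<lambda>z. int (s z)) = 1 \<and> (k' \<noteq> k \<longrightarrow> gfac k' (\<lambda>z. int (s z)) = 0)"
proof -
  have full: "ind (gX V E) \<in> agglomerations V E r"
    by (rule ind_H) (use rV in \<open>auto simp: gX_def\<close>)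
  have single: "ind {Inl v} \<in> agglomerations V E r" if "v \<in> V" for v
    by (rule ind_H) (use that in \<open>auto simp: gX_def\<close>)
  show ?thesis
  proof (cases k)
    case (FE e)
    then have e: "e \<in> E" using k by (simp add: memK)
    have C1: "ind (Inl ` r e \<union> {Inr e}) \<in> agglomerations V E r"
      by (rule ind_H) (use e rV in \<open>auto simp: gX_def\<close>)
    show ?thesis
    proof (cases "\<exists>v' e'. k' = FI v' e' \<and> e' \<noteq> e")
      case True
      then obtain v' e' where ke: "k' = FI v' e'" "e' \<noteq> e" by blast
      then have "e' \<in> E" "v' \<in> r e'" using k' by (auto simp: memK)
      then have "v' \<in> V" using rV by auto
      then show ?thesis using full e \<open>e' \<in> E\<close> FE ke
        by (intro bexI[of _ "ind (gX V E)"]) (auto simp: gfac_ind gX_def)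
    next
      case False
      have "gfac k' (\<lambda>z. int (ind (Inl ` r e \<union> {Inr e}) z)) = 0" if "k' \<noteq> k"
      proof (cases k')
        case (FE e') then show ?thesis using that FE \<open>k = FE e\<close> by (auto simp: gfac_ind)
      next
        case (FI v' e') then have "e' = e" "v' \<in> r e" using False k' by (auto simp: memK)
        then show ?thesis using FI by (auto simp: gfac_ind)
      next
        case (FV v') then have "v' \<notin> r e" using k' e by (auto simp: memK iso_iff)
        then show ?thesis using FV by (auto simp: gfac_ind)
      qed
      then show ?thesis using C1 FE by (intro bexI[of _ "ind (Inl ` r e \<union> {Inr e})"]) (auto simp: gfac_ind)
    qed
  next
    case (FI v e)
    then have e: "e \<in> E" "v \<in> r e" using k by (auto simp: memK)
    then have vV: "v \<in> V" using rV by auto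
    have C2: "ind (Inl ` V \<union> Inr ` (E - {e})) \<in> agglomerations V E r"
      by (rule ind_H) (use rV in \<open>auto simp: gX_def\<close>)
    show ?thesis
    proof (cases "\<exists>e'. k' = FI v e' \<and> e' \<noteq> e")
      case True
      then obtain e' where ke: "k' = FI v e'" "e' \<noteq> e" by blast
      then have "e' \<in> E" using k' by (auto simp: memK)
      then show ?thesis using C2 vV FI ke
        by (intro bexI[of _ "ind (Inl ` V \<union> Inr ` (E - {e}))"]) (auto simp: gfac_ind)
    next
      case False
      have "gfac k' (\<lambda>z. int (ind {Inl v} z)) = 0" if "k' \<noteq> k"
      proof (cases k')
        case (FE e') then show ?thesis by (auto simp: gfac_ind)
      next
        case (FI v' e') then have "v' \<noteq> v" using False that \<open>k = FI v e\<close> by auto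
        then show ?thesis using FI by (auto simp: gfac_ind)
      next
        case (FV v') then have "v' \<noteq> v" using k' e by (auto simp: memK iso_iff)
        then show ?thesis using FV by (auto simp: gfac_ind)
      qed
      then show ?thesis using single[OF vV] FI by (intro bexI[of _ "ind {Inl v}"]) (auto simp: gfac_ind)
    qed
  next
    case (FV v)
    then have v: "v \<in> V" "\<forall>e\<in>E. v \<notin> r e" using k by (auto simp: memK iso_iff)
    have "gfac k' (\<lambda>z. int (ind {Inl v} z)) = 0" if "k' \<noteq> k"
    proof (cases k')
      case (FE e') then show ?thesis by (auto simp: gfac_ind)
    next
      case (FI v' e') then have "v' \<noteq> v" using k' v by (auto simp: memK)
      then show ?thesis using FI by (auto simp: gfac_ind)
    next
      case (FV v') then have "v' \<noteq> v" using that \<open>k = FV v\<close> by auto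
      then show ?thesis using FV by (auto simp: gfac_ind)
    qed
    then show ?thesis using single[OF v(1)] FV by (intro bexI[of _ "ind {Inl v}"]) (auto simp: gfac_ind)
  qed
qed

sublocale cone "gX V E" "gK V E r" gfac "agglomerations V E r"
proof
  show "finite (gK V E r)" by (rule finK)
  show "gfac k (\<lambda>z. x z + y z) = gfac k x + gfac k y" for k x y by (cases k) auto
  show "gfac k (\<lambda>z. c * x z) = c * gfac k x" for k c x by (cases k) (auto simp: algebra_simps)
  show "agglomerations V E r =
   {a. (\<forall>z. z \<notin> gX V E \<longrightarrow> a z = 0) \<and> (\<forall>k\<in>gK V E r. gfac k (\<lambda>z. int (a z)) \<ge> 0)}" by (rule H_eq)
  show "x z \<ge> 0" if "\<forall>z. z \<notin> gX V E \<longrightarrow> x z = 0" "\<forall>k\<in>gK V E r. gfac k x \<ge> 0" for x z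
    using nonneg_g that by blast
  show "\<exists>s\<in>agglomerations V E r. gfac k (\<lambda>z. int (s z)) = 1 \<and> (k' \<noteq> k \<longrightarrow> gfac k' (\<lambda>z. int (s z)) = 0)"
    if "k \<in> gK V E r" "k' \<in> gK V E r" for k k' using sep_g that by blast
qed

end



lemma lookup_map_int: "Poly_Mapping.lookup (Poly_Mapping.map int p) i = int (Poly_Mapping.lookup p i)"
  by (simp add: Poly_Mapping.map.rep_eq when_def)

context gr begin

lemma phi_char:
  assumes dt: "divisor_theory (agglomerations V E r) I \<phi>"
  shows "\<exists>\<sigma>. bij_betw \<sigma> I (gK V E r) \<and> (\<forall>h\<in>agglomerations V E r. \<forall>i.
     int (Poly_Mapping.lookup (\<phi> h) i) = (if i \<in> I then gfac (\<sigma> i) (\<lambda>z. int (h z)) else 0))"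
proof -
  interpret d: divthy "gX V E" "gK V E r" gfac "agglomerations V E r" I \<phi>
    using cone_axioms dt by (simp add: divthy_def divthy_axioms_def)
  obtain \<sigma> where s: "bij_betw \<sigma> I (gK V E r)" "\<forall>i\<in>I. \<forall>a\<in>agglomerations V E r. int (d.L i a) = F (\<sigma> i) a"
    using d.exists_sigma by blast
  have "int (Poly_Mapping.lookup (\<phi> h) i) = (if i \<in> I then gfac (\<sigma> i) (\<lambda>z. int (h z)) else 0)"
    if "h \<in> agglomerations V E r" for h i
    using s(2) d.L_out[OF that] that unfolding d.L_def F_def by auto
  then show ?thesis using s(1) by blast
qed


lemma card_calc:
  fixes ev :: "'v \<Rightarrow> 'e"
  assumes ev: "\<And>v. v \<in> V \<Longrightarrow> v \<notin> isolated_vertices V E r \<Longrightarrow> ev v \<in> E \<and> v \<in> r (ev v)"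
  shows "card (gInc V E r - (\<lambda>v. FI v (ev v)) ` (V - isolated_vertices V E r)) =
     nat (2 * int (card E) - int (card V) + int (card (isolated_vertices V E r)))"
proof -
  let ?iso = "isolated_vertices V E r"
  let ?Ch = "(\<lambda>v. FI v (ev v)) ` (V - ?iso)"
  have isoV: "?iso \<subseteq> V" by (auto simp: iso_iff)
  have finInc: "finite (gInc V E r)" unfolding Inc_eq using finE finr by auto
  have cInc: "card (gInc V E r) = 2 * card E"
  proof -
    have "card (gInc V E r) = (\<Sum>e\<in>E. card ((\<lambda>v. FI v e) ` r e))"
      unfolding Inc_eq using finE finr by (intro card_UN_disjoint) auto
    also have "\<dots> = (\<Sum>e\<in>E. 2)"
      by (intro sum.cong refl) (simp add: card_image inj_on_def rc)
    finally show ?thesis by simp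
  qed
  have sub: "?Ch \<subseteq> gInc V E r" using ev unfolding gInc_def by auto
  have cCh: "card ?Ch = card V - card ?iso"
  proof -
    have "card ?Ch = card (V - ?iso)" by (rule card_image) (auto simp: inj_on_def)
    also have "\<dots> = card V - card ?iso" using isoV finV by (intro card_Diff_subset) (auto intro: finite_subset)
    finally show ?thesis .
  qed
  have le1: "card ?iso \<le> card V" using isoV finV by (rule card_mono[rotated])
  have le2: "card ?Ch \<le> card (gInc V E r)" using sub finInc by (rule card_mono[rotated])
  have "card (gInc V E r - ?Ch) = card (gInc V E r) - card ?Ch"
    using sub finInc by (intro card_Diff_subset) (auto intro: finite_subset)
  then show ?thesis using cInc cCh le1 le2 by simp
qed

lemma class_group:
  fixes \<sigma> :: "'i \<Rightarrow> ('v,'e) facet" and \<phi> :: "('v + 'e \<Rightarrow> nat) \<Rightarrow> ('i \<Rightarrow>\<^sub>0 nat)" and I :: "'i set"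
  assumes bij: "bij_betw \<sigma> I (gK V E r)"
    and ch: "\<And>h i. h \<in> agglomerations V E r \<Longrightarrow>
      int (Poly_Mapping.lookup (\<phi> h) i) = (if i \<in> I then gfac (\<sigma> i) (\<lambda>z. int (h z)) else 0)"
  shows "divisor_class_group (agglomerations V E r) I \<phi> \<cong>
     free_Abelian_group {..< nat (2 * int (card E) - int (card V) + int (card (isolated_vertices V E r)))}"
proof -
  let ?iso = "isolated_vertices V E r"
  let ?K = "gK V E r"
  let ?H = "agglomerations V E r"
  define ev where "ev v = (SOME e. e \<in> E \<and> v \<in> r e)" for v
  have ev: "ev v \<in> E \<and> v \<in> r (ev v)" if "v \<in> V" "v \<notin> ?iso" for v
  proof -
    have "\<exists>e. e \<in> E \<and> v \<in> r e" using that by (auto simp: iso_iff)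
    then show ?thesis unfolding ev_def by (rule someI_ex)
  qed
  define Ch where "Ch = (\<lambda>v. FI v (ev v)) ` (V - ?iso)"
  define R where "R = gInc V E r - Ch"
  define n where "n = card R"
  have n_eq: "n = nat (2 * int (card E) - int (card V) + int (card ?iso))"
    unfolding n_def R_def Ch_def by (rule card_calc) (use ev in blast)
  have RK: "R \<subseteq> ?K" unfolding R_def gK_def by auto
  have finR: "finite R" using finK RK by (rule finite_subset[rotated])
  obtain \<beta> where \<beta>: "bij_betw \<beta> {..<n} R"
    using ex_bij_betw_nat_finite[OF finR] by (auto simp: atLeast0LessThan n_def)
  define \<beta>' where "\<beta>' = inv_into {..<n} \<beta>"
  have \<beta>in: "m < n \<Longrightarrow> \<beta> m \<in> R" for m using \<beta> by (auto simp: bij_betw_def)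
  have \<beta>'in: "k \<in> R \<Longrightarrow> \<beta>' k < n \<and> \<beta> (\<beta>' k) = k" for k
    using \<beta> unfolding \<beta>'_def by (metis bij_betw_inv_into_right bij_betw_imp_surj_on inv_into_into lessThan_iff)
  have \<beta>'\<beta>: "m < n \<Longrightarrow> \<beta>' (\<beta> m) = m" for m
    using \<beta> unfolding \<beta>'_def bij_betw_def by (simp add: inv_into_f_f)
  define \<tau> where "\<tau> = inv_into I \<sigma>"
  have \<tau>in: "k \<in> ?K \<Longrightarrow> \<tau> k \<in> I \<and> \<sigma> (\<tau> k) = k" for k
    using bij unfolding \<tau>_def by (metis bij_betw_inv_into_right bij_betw_imp_surj_on inv_into_into)
  have \<tau>\<sigma>: "i \<in> I \<Longrightarrow> \<tau> (\<sigma> i) = i" for i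
    using bij unfolding \<tau>_def bij_betw_def by (simp add: inv_into_f_f)
  have \<sigma>in: "i \<in> I \<Longrightarrow> \<sigma> i \<in> ?K" for i using bij by (auto simp: bij_betw_def)
  have finI: "finite I" using bij finK by (simp add: bij_betw_finite)
  define Y where "Y y k = Poly_Mapping.lookup y (\<tau> k)" for y :: "'i \<Rightarrow>\<^sub>0 int" and k
  define ax where "ax y = (\<lambda>z. case z of
      Inl v \<Rightarrow> (if v \<notin> V then 0 else if v \<in> ?iso then Y y (FV v) else Y y (FI v (ev v)) + Y y (FE (ev v)))
    | Inr e \<Rightarrow> (if e \<in> E then Y y (FE e) else 0))" for y
  define pf where "pf y = (\<lambda>m. if m < n then Y y (\<beta> m) - gfac (\<beta> m) (ax y) else 0)" for y
  define \<psi> where "\<psi> y = Abs_poly_mapping (pf y)" for y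
  have finpf: "finite {m. pf y m \<noteq> 0}" for y
    by (rule finite_subset[of _ "{..<n}"]) (auto simp: pf_def split: if_splits)
  have lk\<psi>: "Poly_Mapping.lookup (\<psi> y) = pf y" for y
    unfolding \<psi>_def by (rule lookup_Abs_poly_mapping[OF finpf])
  define G1 where "G1 = free_Abelian_group I"
  define G2 where "G2 = free_Abelian_group {..<n}"
  have grp1: "group G1" and grp2: "group G2" unfolding G1_def G2_def by simp_all
  have ax_add: "ax (x + y) = (\<lambda>z. ax x z + ax y z)" for x y
    by (rule ext, simp add: ax_def Y_def lookup_add split: sum.split)
  have \<psi>_add: "\<psi> (x + y) = \<psi> x + \<psi> y" for x y
  proof (rule poly_mapping_eqI)
    fix m
    show "Poly_Mapping.lookup (\<psi> (x + y)) m = Poly_Mapping.lookup (\<psi> x + \<psi> y) m"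
      by (simp add: lk\<psi> lookup_add pf_def ax_add fac_add Y_def)
  qed
  have \<psi>car: "\<psi> y \<in> carrier G2" for y
    by (auto simp: G2_def free_Abelian_group_def in_keys_iff lk\<psi> pf_def split: if_splits)
  have hom: "\<psi> \<in> hom G1 G2"
  proof (rule homI)
    show "\<psi> x \<in> carrier G2" for x by (rule \<psi>car)
    show "\<psi> (x \<otimes>\<^bsub>G1\<^esub> y) = \<psi> x \<otimes>\<^bsub>G2\<^esub> \<psi> y" for x y
      by (simp add: G1_def G2_def \<psi>_add)
  qed
  interpret gh: group_hom G1 G2 \<psi>
    using grp1 grp2 hom by (simp add: group_hom_def group_hom_axioms_def)
  define \<phi>' where "\<phi>' h = Poly_Mapping.map int (\<phi> h)" for h
  have lk\<phi>': "Poly_Mapping.lookup (\<phi>' h) i = (if i \<in> I then gfac (\<sigma> i) (\<lambda>z. int (h z)) else 0)"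
    if "h \<in> ?H" for h i
    unfolding \<phi>'_def lookup_map_int using ch[OF that] .
  have \<phi>'car: "\<phi>' h \<in> carrier G1" if "h \<in> ?H" for h
    using lk\<phi>'[OF that] by (auto simp: G1_def free_Abelian_group_def in_keys_iff split: if_splits)
  have Y\<phi>': "Y (\<phi>' h) k = gfac k (\<lambda>z. int (h z))" if "h \<in> ?H" "k \<in> ?K" for h k
    using lk\<phi>'[OF that(1)] \<tau>in[OF that(2)] by (simp add: Y_def)
  have ax\<phi>': "ax (\<phi>' h) = (\<lambda>z. int (h z))" if h: "h \<in> ?H" for h
  proof
    fix z
    show "ax (\<phi>' h) z = int (h z)"
    proof (cases z)
      case (Inl v)
      show ?thesis
      proof (cases "v \<in> V")
        case False
        then have "h z = 0" using Inl h by (intro H_supp) (auto simp: gX_def)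
        then show ?thesis using Inl False by (simp add: ax_def)
      next
        case vV: True
        show ?thesis
        proof (cases "v \<in> ?iso")
          case True
          then have "FV v \<in> ?K" by (simp add: memK)
          then show ?thesis using Inl vV True Y\<phi>'[OF h] by (simp add: ax_def)
        next
          case False
          then have "FI v (ev v) \<in> ?K" "FE (ev v) \<in> ?K" using ev[OF vV False] by (auto simp: memK)
          then show ?thesis using Inl vV False Y\<phi>'[OF h] by (simp add: ax_def)
        qed
      qed
    next
      case (Inr e)
      show ?thesis
      proof (cases "e \<in> E")
        case False
        then have "h z = 0" using Inr h by (intro H_supp) (auto simp: gX_def)
        then show ?thesis using Inr False by (simp add: ax_def)
      next
        case True
        then have "FE e \<in> ?K" by (simp add: memK)
        then show ?thesis using Inr True Y\<phi>'[OF h] by (simp add: ax_def)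
      qed
    qed
  qed
  have \<psi>\<phi>': "\<psi> (\<phi>' h) = 0" if h: "h \<in> ?H" for h
  proof (rule poly_mapping_eqI)
    fix m
    show "Poly_Mapping.lookup (\<psi> (\<phi>' h)) m = Poly_Mapping.lookup 0 m"
    proof (cases "m < n")
      case True
      then have "\<beta> m \<in> ?K" using \<beta>in RK by auto
      then show ?thesis using True Y\<phi>'[OF h] ax\<phi>'[OF h] by (simp add: lk\<psi> pf_def)
    qed (simp add: lk\<psi> pf_def)
  qed
  have ker_sub: "kernel G1 G2 \<psi> \<subseteq> generate G1 (\<phi>' ` ?H)"
  proof
    fix y assume "y \<in> kernel G1 G2 \<psi>"
    then have yc: "y \<in> carrier G1" and y0: "\<psi> y = 0" by (auto simp: kernel_def G2_def)
    have ky: "Poly_Mapping.keys y \<subseteq> I" using yc by (simp add: G1_def free_Abelian_group_def)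
    define x where "x = ax y"
    have xs: "x z = 0" if "z \<notin> gX V E" for z
      using that unfolding x_def ax_def gX_def by (cases z) auto
    have ly: "Poly_Mapping.lookup y i = (if i \<in> I then gfac (\<sigma> i) x else 0)" for i
    proof (cases "i \<in> I")
      case False then show ?thesis using ky by (auto simp: in_keys_iff)
    next
      case True
      define k where "k = \<sigma> i"
      have k: "k \<in> ?K" using \<sigma>in[OF True] by (simp add: k_def)
      have Yk: "Y y k = Poly_Mapping.lookup y i" using \<tau>\<sigma>[OF True] by (simp add: Y_def k_def)
      have "gfac k x = Y y k"
      proof (cases k)
        case (FE e)
        then have "e \<in> E" using k by (simp add: memK)
        then show ?thesis using FE by (simp add: x_def ax_def)
      next
        case (FV v)
        then have "v \<in> ?iso" using k by (simp add: memK)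
        then have "v \<in> V" by (simp add: iso_iff)
        then show ?thesis using FV \<open>v \<in> ?iso\<close> by (simp add: x_def ax_def)
      next
        case (FI v e)
        then have ve: "e \<in> E" "v \<in> r e" using k by (auto simp: memK)
        then have vV: "v \<in> V" and ni: "v \<notin> ?iso" using rV by (auto simp: iso_iff)
        show ?thesis
        proof (cases "e = ev v")
          case True
          then show ?thesis using FI vV ni ve by (simp add: x_def ax_def)
        next
          case False
          then have "k \<in> R" using FI ve unfolding R_def Ch_def gInc_def by auto
          then obtain m where m: "m < n" "\<beta> m = k" using \<beta>'in by blast
          have "Poly_Mapping.lookup (\<psi> y) m = 0" using y0 by simp
          then show ?thesis using m by (simp add: lk\<psi> pf_def x_def)
        qed
      qed
      then show ?thesis using Yk True by (simp add: k_def)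
    qed
    obtain h1 h2 where h: "h1 \<in> ?H" "h2 \<in> ?H" "\<And>z. x z = int (h1 z) - int (h2 z)"
      using diff_rep[of x, OF xs] by blast
    have xfun: "x = (\<lambda>z. int (h1 z) - int (h2 z))" using h(3) by auto
    have "y = \<phi>' h1 + (- \<phi>' h2)"
    proof (rule poly_mapping_eqI)
      fix i
      show "Poly_Mapping.lookup y i = Poly_Mapping.lookup (\<phi>' h1 + - \<phi>' h2) i"
        by (simp add: ly lookup_add lookup_minus lk\<phi>'[OF h(1)] lk\<phi>'[OF h(2)] xfun fac_minus)
    qed
    moreover have "inv\<^bsub>G1\<^esub> (\<phi>' h2) = - \<phi>' h2"
      using \<phi>'car[OF h(2)] unfolding G1_def by (intro inv_free_Abelian_group) (simp add: free_Abelian_group_def)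
    moreover have "\<phi>' h1 \<otimes>\<^bsub>G1\<^esub> inv\<^bsub>G1\<^esub> (\<phi>' h2) \<in> generate G1 (\<phi>' ` ?H)"
      using h(1,2) by (intro generate.eng generate.incl generate.inv) auto
    ultimately show "y \<in> generate G1 (\<phi>' ` ?H)" by (simp add: G1_def)
  qed
  have gen_sub: "generate G1 (\<phi>' ` ?H) \<subseteq> kernel G1 G2 \<psi>"
  proof (rule group.generate_subgroup_incl[OF grp1 _ gh.subgroup_kernel])
    show "\<phi>' ` ?H \<subseteq> kernel G1 G2 \<psi>"
      using \<phi>'car \<psi>\<phi>' by (auto simp: kernel_def G2_def)
  qed
  have surj: "\<psi> ` carrier G1 = carrier G2"
  proof
    show "\<psi> ` carrier G1 \<subseteq> carrier G2" using \<psi>car by auto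
    show "carrier G2 \<subseteq> \<psi> ` carrier G1"
    proof
      fix w assume w: "w \<in> carrier G2"
      then have kw: "Poly_Mapping.keys w \<subseteq> {..<n}" by (simp add: G2_def free_Abelian_group_def)
      define fy where "fy i = (if i \<in> I \<and> \<sigma> i \<in> R then Poly_Mapping.lookup w (\<beta>' (\<sigma> i)) else 0)" for i
      have finfy: "finite {i. fy i \<noteq> 0}"
        by (rule finite_subset[OF _ finI]) (auto simp: fy_def split: if_splits)
      define y where "y = Abs_poly_mapping fy"
      have ly: "Poly_Mapping.lookup y = fy" unfolding y_def by (rule lookup_Abs_poly_mapping[OF finfy])
      have yc: "y \<in> carrier G1"
        by (auto simp: G1_def free_Abelian_group_def in_keys_iff ly fy_def split: if_splits)
      have Yy: "Y y k = (if k \<in> R then Poly_Mapping.lookup w (\<beta>' k) else 0)" if "k \<in> ?K" for k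
        using \<tau>in[OF that] by (simp add: Y_def ly fy_def)
      have ax0: "ax y = (\<lambda>z. 0)"
      proof
        fix z
        show "ax y z = 0"
        proof (cases z)
          case (Inl v)
          show ?thesis
          proof (cases "v \<in> V \<and> v \<notin> ?iso")
            case True
            then have "FI v (ev v) \<in> ?K" "FE (ev v) \<in> ?K" "FI v (ev v) \<notin> R" "FE (ev v) \<notin> R"
              using ev[of v] unfolding R_def Ch_def gInc_def by (auto simp: memK)
            then show ?thesis using Inl True Yy by (simp add: ax_def)
          next
            case False
            moreover have "v \<in> ?iso \<Longrightarrow> FV v \<in> ?K \<and> FV v \<notin> R"
              unfolding R_def gInc_def by (auto simp: memK)
            ultimately show ?thesis using Inl Yy by (auto simp: ax_def)
          qed
        next
          case (Inr e)
          have "e \<in> E \<Longrightarrow> FE e \<in> ?K \<and> FE e \<notin> R" unfolding R_def gInc_def by (auto simp: memK)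
          then show ?thesis using Inr Yy by (auto simp: ax_def)
        qed
      qed
      have "\<psi> y = w"
      proof (rule poly_mapping_eqI)
        fix m
        show "Poly_Mapping.lookup (\<psi> y) m = Poly_Mapping.lookup w m"
        proof (cases "m < n")
          case True
          then have "\<beta> m \<in> R" "\<beta> m \<in> ?K" using \<beta>in RK by auto
          then show ?thesis using True Yy \<beta>'\<beta>[OF True] by (simp add: lk\<psi> pf_def ax0 fac_zero)
        next
          case False
          then have "m \<notin> Poly_Mapping.keys w" using kw by auto
          then show ?thesis using False by (simp add: lk\<psi> pf_def in_keys_iff)
        qed
      qed
      then show "w \<in> \<psi> ` carrier G1" using yc by blast
    qed
  qed
  have "G1 Mod kernel G1 G2 \<psi> \<cong> G2" using gh.FactGroup_iso[OF surj] .
  moreover have "kernel G1 G2 \<psi> = generate G1 (\<phi>' ` ?H)" using ker_sub gen_sub by blast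
  ultimately show ?thesis
    unfolding divisor_class_group_def G1_def G2_def \<phi>'_def n_eq by simp
qed

end


theorem corollary4p7:
  fixes V :: "'v set" and E :: "'e set" and r :: "'e \<Rightarrow> 'v set"
  assumes "is_graph V E r"
  shows "(\<exists>(I :: nat set) \<phi>. divisor_theory (agglomerations V E r) I \<phi>) \<and>
         (\<forall>(I :: 'i set) \<phi>. divisor_theory (agglomerations V E r) I \<phi> \<longrightarrow>
            divisor_class_group (agglomerations V E r) I \<phi> \<cong>
              free_Abelian_group
                {..< nat (2 * int (card E) - int (card V) + int (card (isolated_vertices V E r)))})"
proof -
  interpret gr V E r using assms by (simp add: gr_def)
  show ?thesis
  proof (intro conjI allI impI)
    show "\<exists>(I :: nat set) \<phi>. divisor_theory (agglomerations V E r) I \<phi>" by (rule exists_dt)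
    fix I :: "'i set" and \<phi>
    assume dt: "divisor_theory (agglomerations V E r) I \<phi>"
    obtain \<sigma> where s: "bij_betw \<sigma> I (gK V E r)" "\<forall>h\<in>agglomerations V E r. \<forall>i.
     int (Poly_Mapping.lookup (\<phi> h) i) = (if i \<in> I then gfac (\<sigma> i) (\<lambda>z. int (h z)) else 0)"
      using phi_char[OF dt] by blast
    show "divisor_class_group (agglomerations V E r) I \<phi> \<cong>
              free_Abelian_group
                {..< nat (2 * int (card E) - int (card V) + int (card (isolated_vertices V E r)))}"
      by (rule class_group[OF s(1)]) (use s(2) in blast)
  qed
qed

end
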